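(* Let $\mathcal I_1\subset\mathbb C[L^-\mathrm{GL}_K]$ be the ideal of the scheme-theoretic image $\mathcal M^1$ of $\pi_1$, and let $\mathcal I'_1$ be the ideal generated by the elements $T^{(m)}_{ab}T^{(n+k)}_{cd}-T^{(n)}_{ab}T^{(m+k)}_{cd}$ and $T^{(m)}_{a_1b_1}T^{(n)}_{a_2b_2}-T^{(m)}_{a_1b_2}T^{(n)}_{a_2b_1}$ for all $m,n,k\in\mathbb Z_{\ge0}$ and $a,b,c,d,a_1,a_2,b_1,b_2\in\{1,\dots,K\}$. If $\mathcal I'_1$ is a radical ideal, then $\mathcal I_1=\mathcal I'_1$.
   Context: $L^-\mathrm{GL}_K$ is the group scheme of power series $1+\sum_{i\ge1}g_iz^{-i}$, $g_i\in\mathfrak{gl}_K$, with $\mathbb C[L^-\mathrm{GL}_K]=\mathbb C[T^{(n)}_{ab}:n\ge0,1\le a,b\le K]$, $T^{(n)}_{ab}$ the $(a,b)$ entry of $g_{n+1}$. $\mathcal M(1,K)=\mathrm{Rep}(1,K)/\!/\mathrm{GL}_1$, where $\mathrm{Rep}(1,K)$ consists of $(B,\psi,\overline\psi)$, $B\in\mathbb C$, $\psi\in\mathrm{Mat}_{1\times K}$, $\overline\psi\in\mathrm{Mat}_{K\times1}$, $\lambda\cdot(B,\psi,\overline\psi)=(B,\lambda\psi,\lambda^{-1}\overline\psi)$. $\pi_1:\mathcal M(1,K)\to L^-\mathrm{GL}_K$ sends $(B,\psi,\overline\psi)$ to $1+\overline\psi(z-\widetilde B/2)^{-1}\psi$,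 $\widetilde B=B+\psi\overline\psi$; its image consists of series $1+g/(z-b)$ with $b\in\mathbb C$ and $\mathrm{rank}(g)\le1$. *)

theory Defs
  imports Complex_Main "HOL-Library.Poly_Mapping"
begin

text \<open>Coordinate variables of the loop group: T n a b is the (a,b) entry of g_(n+1).
  Indices a,b range over a finite type 'k with CARD('k) = K.\<close>

type_synonym 'k var = "nat \<times> 'k \<times> 'k"

text \<open>The polynomial ring C[T^(n)_ab : n \<ge> 0, a,b] (infinitely many variables),
  polynomials = finitely supported functions from monomials (exponent vectors) to C.\<close>
type_synonym 'k cpoly = "('k var \<Rightarrow>\<^sub>0 nat) \<Rightarrow>\<^sub>0 complex"

definition Tvar :: "nat \<Rightarrow> 'k \<Rightarrow> 'k \<Rightarrow> 'k cpoly" where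
  "Tvar n a b = Poly_Mapping.single (Poly_Mapping.single (n, a, b) 1) 1"

definition mono_eval :: "('k var \<Rightarrow>\<^sub>0 nat) \<Rightarrow> ('k var \<Rightarrow> complex) \<Rightarrow> complex" where
  "mono_eval mn x = (\<Prod>v\<in>Poly_Mapping.keys mn. x v ^ Poly_Mapping.lookup mn v)"

definition peval :: "'k cpoly \<Rightarrow> ('k var \<Rightarrow> complex) \<Rightarrow> complex" where
  "peval p x = (\<Sum>mn\<in>Poly_Mapping.keys p. Poly_Mapping.lookup p mn * mono_eval mn x)"

definition is_ideal :: "'a::comm_ring_1 set \<Rightarrow> bool" where
  "is_ideal I \<longleftrightarrow> 0 \<in> I \<and> (\<forall>x\<in>I. \<forall>y\<in>I. x + y \<in> I) \<and> (\<forall>r. \<forall>x\<in>I. r * x \<in> I)"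

definition ideal_gen :: "'a::comm_ring_1 set \<Rightarrow> 'a set" where
  "ideal_gen S = \<Inter>{I. is_ideal I \<and> S \<subseteq> I}"

definition is_radical :: "'a::comm_ring_1 set \<Rightarrow> bool" where
  "is_radical I \<longleftrightarrow> (\<forall>f (n::nat). f ^ n \<in> I \<longrightarrow> f \<in> I)"

text \<open>The map pi_1: (B, psi, psibar) \<mapsto> 1 + psibar (z - Bt/2)^(-1) psi, Bt = B + psi psibar.
  Expanding, g_(n+1) = (Bt/2)^n psibar psi, so T^(n)_ab \<mapsto> (Bt/2)^n psibar_a psi_b.\<close>
definition pi1 :: "complex \<Rightarrow> ('k::finite \<Rightarrow> complex) \<Rightarrow> ('k \<Rightarrow> complex) \<Rightarrow> 'k var \<Rightarrow> complex" where
  "pi1 B psi psibar = (\<lambda>(n, a, b).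
     ((B + (\<Sum>c\<in>UNIV. psi c * psibar c)) / 2) ^ n * psibar a * psi b)"

text \<open>Ideal of the scheme-theoretic image of pi_1: kernel of the pullback
  C[L^-GL_K] \<rightarrow> C[M(1,K)] \<subseteq> C[Rep(1,K)]; since Rep(1,K) is an affine space
  (reduced, C infinite) this is the set of polynomials vanishing on the image.\<close>
definition I1 :: "('k::finite) cpoly set" where
  "I1 = {f. \<forall>B psi psibar. peval f (pi1 B psi psibar) = 0}"

definition I1' :: "('k::finite) cpoly set" where
  "I1' = ideal_gen
     ({Tvar m a b * Tvar (n + k) c d - Tvar n a b * Tvar (m + k) c d
        | m n k a b c d. True} \<union>
      {Tvar m a1 b1 * Tvar n a2 b2 - Tvar m a1 b2 * Tvar n a2 b1
        | m n a1 a2 b1 b2. True})"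

end

theory Submission
  imports Defs
begin

lemma sum_keys_superset:
  fixes p :: "'a \<Rightarrow>\<^sub>0 'b::zero" and g :: "'a \<Rightarrow> 'b \<Rightarrow> 'c::comm_monoid_add"
  assumes "finite S" "Poly_Mapping.keys p \<subseteq> S" "\<And>k. g k 0 = 0"
  shows "(\<Sum>k\<in>Poly_Mapping.keys p. g k (Poly_Mapping.lookup p k)) = (\<Sum>k\<in>S. g k (Poly_Mapping.lookup p k))"
  by (rule sum.mono_neutral_left) (use assms in \<open>auto simp: in_keys_iff\<close>)

lemma prod_keys_superset:
  fixes p :: "'a \<Rightarrow>\<^sub>0 'b::zero" and g :: "'a \<Rightarrow> 'b \<Rightarrow> 'c::comm_monoid_mult"
  assumes "finite S" "Poly_Mapping.keys p \<subseteq> S" "\<And>k. g k 0 = 1"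
  shows "(\<Prod>k\<in>Poly_Mapping.keys p. g k (Poly_Mapping.lookup p k)) = (\<Prod>k\<in>S. g k (Poly_Mapping.lookup p k))"
  by (rule prod.mono_neutral_left) (use assms in \<open>auto simp: in_keys_iff\<close>)

lemma poly_sum_monomials:
  "(\<Sum>k\<in>Poly_Mapping.keys p. Poly_Mapping.single k (Poly_Mapping.lookup p k)) = p"
proof (rule poly_mapping_eqI)
  fix x
  show "Poly_Mapping.lookup (\<Sum>k\<in>Poly_Mapping.keys p. Poly_Mapping.single k (Poly_Mapping.lookup p k)) x
        = Poly_Mapping.lookup p x"
    by (simp add: lookup_sum lookup_single when_def sum.delta in_keys_iff)
qed

lemma sum_single_same:
  "(\<Sum>x\<in>A. Poly_Mapping.single k (g x)) = Poly_Mapping.single k (sum g A)"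
  by (induction A rule: infinite_finite_induct) (simp_all add: single_add)

lemma split_key:
  fixes M :: "'a \<Rightarrow>\<^sub>0 nat"
  assumes "v \<in> Poly_Mapping.keys M"
  shows "M = Poly_Mapping.single v 1 + (M - Poly_Mapping.single v 1)"
proof (rule poly_mapping_eqI)
  fix k
  have "Poly_Mapping.lookup M v \<ge> 1" using assms by (simp add: in_keys_iff)
  then show "Poly_Mapping.lookup M k = Poly_Mapping.lookup (Poly_Mapping.single v 1 + (M - Poly_Mapping.single v 1)) k"
    by (cases "k = v") (simp_all add: lookup_add lookup_minus lookup_single when_def)
qed

definition lin :: "('a \<Rightarrow> nat) \<Rightarrow> ('a \<Rightarrow>\<^sub>0 nat) \<Rightarrow> nat" where
  "lin h M = (\<Sum>v\<in>Poly_Mapping.keys M. Poly_Mapping.lookup M v * h v)"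

lemma lin_add: "lin h (M + N) = lin h M + lin h N"
  unfolding lin_def
  by (rule setsum_keys_plus_distrib[where f = "\<lambda>k x. x * h k"]) (simp_all add: algebra_simps)

lemma lin_single: "lin h (Poly_Mapping.single v c) = c * h v"
  by (simp add: lin_def)

lemma lin_zero [simp]: "lin h 0 = 0"
  by (simp add: lin_def)

lemma lin_pos:
  assumes "lin h M > 0"
  shows "\<exists>v\<in>Poly_Mapping.keys M. h v > 0"
proof (rule ccontr)
  assume "\<not> ?thesis"
  then have "lin h M = 0" unfolding lin_def by (intro sum.neutral) auto
  with assms show False by simp
qed

lemma lin_one_zero:
  assumes "lin (\<lambda>_. 1) M = 0"
  shows "M = 0"
proof -
  have "Poly_Mapping.keys M = {}"
  proof (rule ccontr)
    assume "Poly_Mapping.keys M \<noteq> {}"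
    then obtain v where v: "v \<in> Poly_Mapping.keys M" by blast
    have "lin (\<lambda>_. 1) M = lin (\<lambda>_. 1) (Poly_Mapping.single v 1) + lin (\<lambda>_. 1) (M - Poly_Mapping.single v 1)"
      using split_key[OF v] lin_add by metis
    then show False using assms by (simp add: lin_single)
  qed
  then show ?thesis by simp
qed

lemma lin_one_one:
  assumes "lin (\<lambda>_. 1) M = 1"
  shows "\<exists>v. M = Poly_Mapping.single v 1"
proof -
  obtain v where v: "v \<in> Poly_Mapping.keys M" using lin_pos[of "\<lambda>_. 1" M] assms by auto
  have e: "M = Poly_Mapping.single v 1 + (M - Poly_Mapping.single v 1)" using split_key[OF v] .
  then have "lin (\<lambda>_. 1) M = 1 + lin (\<lambda>_. 1) (M - Poly_Mapping.single v 1)"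
    by (metis lin_add lin_single mult_1)
  then have "M - Poly_Mapping.single v 1 = 0" using assms lin_one_zero by simp
  then show ?thesis using e by (metis add.right_neutral)
qed

lemma ideal_gen_is_ideal: "is_ideal (ideal_gen S)"
  unfolding ideal_gen_def is_ideal_def by auto

lemma ideal_gen_sub: "S \<subseteq> ideal_gen S"
  unfolding ideal_gen_def by auto

lemma ideal_gen_least: "is_ideal I \<Longrightarrow> S \<subseteq> I \<Longrightarrow> ideal_gen S \<subseteq> I"
  unfolding ideal_gen_def by auto

lemma ideal_mult: "is_ideal I \<Longrightarrow> x \<in> I \<Longrightarrow> r * x \<in> I"
  unfolding is_ideal_def by auto

lemma ideal_add: "is_ideal I \<Longrightarrow> x \<in> I \<Longrightarrow> y \<in> I \<Longrightarrow> x + y \<in> I"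
  unfolding is_ideal_def by auto

lemma ideal_zero: "is_ideal I \<Longrightarrow> 0 \<in> I"
  unfolding is_ideal_def by auto

lemma ideal_uminus: "is_ideal I \<Longrightarrow> x \<in> I \<Longrightarrow> - x \<in> I"
  using ideal_mult[of I x "-1"] by simp

lemma ideal_sum: "is_ideal I \<Longrightarrow> (\<And>i. i \<in> A \<Longrightarrow> f i \<in> I) \<Longrightarrow> sum f A \<in> I"
  by (induction A rule: infinite_finite_induct) (auto intro: ideal_zero ideal_add)

lemma I1'_ideal: "is_ideal (I1' :: ('k::finite) cpoly set)"
  unfolding I1'_def by (rule ideal_gen_is_ideal)

definition cg :: "((('k::finite) var) \<Rightarrow>\<^sub>0 nat) \<Rightarrow> ('k var \<Rightarrow>\<^sub>0 nat) \<Rightarrow> bool" where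
  "cg M N \<longleftrightarrow> (Poly_Mapping.single M 1 - Poly_Mapping.single N 1 :: 'k cpoly) \<in> I1'"

lemma cg_refl: "cg M M"
  unfolding cg_def using ideal_zero[OF I1'_ideal] by simp

lemma cg_sym: "cg M N \<Longrightarrow> cg N M"
  unfolding cg_def using ideal_uminus[OF I1'_ideal] by fastforce

lemma cg_trans: "cg M N \<Longrightarrow> cg N P \<Longrightarrow> cg M P"
  unfolding cg_def using ideal_add[OF I1'_ideal] by fastforce

lemma cg_add: "cg M N \<Longrightarrow> cg (R + M) (R + N)"
proof -
  assume "cg M N"
  then have "(Poly_Mapping.single R 1 :: 'a cpoly) * (Poly_Mapping.single M 1 - Poly_Mapping.single N 1) \<in> I1'"
    unfolding cg_def by (rule ideal_mult[OF I1'_ideal])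
  then show ?thesis unfolding cg_def by (simp add: right_diff_distrib mult_single)
qed

lemma Tvar_mult: "Tvar m a b * Tvar n c d =
   Poly_Mapping.single (Poly_Mapping.single (m, a, b) 1 + Poly_Mapping.single (n, c, d) 1) 1"
  unfolding Tvar_def by (simp add: mult_single)

lemma gen1: "cg (Poly_Mapping.single (m, a, b) 1 + Poly_Mapping.single (n + k, c, d) 1)
                (Poly_Mapping.single (n, a, b) 1 + Poly_Mapping.single (m + k, c, d) 1)"
proof -
  have "Tvar m a b * Tvar (n + k) c d - Tvar n a b * Tvar (m + k) c d \<in> (I1' :: ('a::finite) cpoly set)"
    unfolding I1'_def by (rule subsetD[OF ideal_gen_sub]) blast
  then show ?thesis unfolding cg_def Tvar_mult .
qed

lemma gen2: "cg (Poly_Mapping.single (m, a1, b1) 1 + Poly_Mapping.single (n, a2, b2) 1)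
                (Poly_Mapping.single (m, a1, b2) 1 + Poly_Mapping.single (n, a2, b1) 1)"
proof -
  have "Tvar m a1 b1 * Tvar n a2 b2 - Tvar m a1 b2 * Tvar n a2 b1 \<in> (I1' :: ('a::finite) cpoly set)"
    unfolding I1'_def by (rule subsetD[OF ideal_gen_sub]) blast
  then show ?thesis unfolding cg_def Tvar_mult .
qed

section \<open>Monomials with equal weights are congruent\<close>

definition wt :: "nat \<Rightarrow> ('k \<Rightarrow> nat) \<Rightarrow> ('k \<Rightarrow> nat) \<Rightarrow> 'k var \<Rightarrow> nat" where
  "wt w0 wa wb v = fst v * w0 + wa (fst (snd v)) + wb (snd (snd v))"

definition sameW :: "('k var \<Rightarrow>\<^sub>0 nat) \<Rightarrow> ('k var \<Rightarrow>\<^sub>0 nat) \<Rightarrow> bool" where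
  "sameW M N \<longleftrightarrow> (\<forall>w0 wa wb. lin (wt w0 wa wb) M = lin (wt w0 wa wb) N)"

lemma wt_one: "wt 0 (\<lambda>_. 1) (\<lambda>_. 0) = (\<lambda>_. 1)"
  by (simp add: fun_eq_iff wt_def)

lemma sameW_deg: "sameW M N \<Longrightarrow> lin (\<lambda>_. 1) M = lin (\<lambda>_. 1) N"
proof -
  assume "sameW M N"
  then have "lin (wt 0 (\<lambda>_. 1) (\<lambda>_. 0)) M = lin (wt 0 (\<lambda>_. 1) (\<lambda>_. 0)) N"
    unfolding sameW_def by blast
  then show ?thesis by (simp only: wt_one)
qed

abbreviation sg :: "'a \<Rightarrow> 'a \<Rightarrow>\<^sub>0 nat" where "sg v \<equiv> Poly_Mapping.single v 1"

lemma peel: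
  fixes M :: "('k::finite) var \<Rightarrow>\<^sub>0 nat"
  assumes v1: "(n1, a, b1) \<in> Poly_Mapping.keys M" and v2: "(n2, a2, b) \<in> Poly_Mapping.keys M"
    and deg: "2 \<le> lin (\<lambda>_. 1) M"
  shows "\<exists>R. cg M (sg (0, a, b) + R) \<and> (\<forall>h. (\<exists>w0 wa wb. h = wt w0 wa wb) \<longrightarrow> lin h M = lin h (sg (0, a, b) + R))"
proof -
  define M1 where "M1 = M - sg (n1, a, b1)"
  have M: "M = sg (n1, a, b1) + M1" unfolding M1_def by (rule split_key[OF v1])
  show ?thesis
  proof (cases "(n1, a, b1) = (n2, a2, b)")
    case True
    then have [simp]: "b1 = b" "a2 = a" "n2 = n1" by auto
    have "lin (\<lambda>_. 1) M = 1 + lin (\<lambda>_. 1) M1" using M by (metis lin_add lin_single mult_1)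
    then have "lin (\<lambda>_. 1) M1 > 0" using deg by simp
    then obtain v3 where v3: "v3 \<in> Poly_Mapping.keys M1" using lin_pos by blast
    obtain m c d where v3e: "v3 = (m, c, d)" by (cases v3) auto
    define M2 where "M2 = M1 - sg (m, c, d)"
    have M1: "M1 = sg (m, c, d) + M2" unfolding M2_def using split_key[OF v3] v3e by simp
    define R where "R = sg (n1 + m, c, d) + M2"
    have "cg (sg (n1, a, b) + sg (0 + m, c, d)) (sg (0, a, b) + sg (n1 + m, c, d))"
      by (rule gen1)
    then have "cg (M2 + (sg (n1, a, b) + sg (m, c, d))) (M2 + (sg (0, a, b) + sg (n1 + m, c, d)))"
      using cg_add by simp
    then have "cg M (sg (0, a, b) + R)"
      unfolding M M1 R_def by (simp add: ac_simps)
    moreover have "lin h M = lin h (sg (0, a, b) + R)" if "\<exists>w0 wa wb. h = wt w0 wa wb" for h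
      using that unfolding M M1 R_def by (auto simp: lin_add lin_single wt_def algebra_simps)
    ultimately show ?thesis by blast
  next
    case False
    have "Poly_Mapping.lookup M1 (n2, a2, b) = Poly_Mapping.lookup M (n2, a2, b)"
      unfolding M1_def using False by (auto simp add: lookup_minus lookup_single when_def)
    then have v2': "(n2, a2, b) \<in> Poly_Mapping.keys M1" using v2 by (simp add: in_keys_iff)
    define M2 where "M2 = M1 - sg (n2, a2, b)"
    have M1: "M1 = sg (n2, a2, b) + M2" unfolding M2_def by (rule split_key[OF v2'])
    define R where "R = sg (n1 + n2, a2, b1) + M2"
    have "cg (sg (n1, a, b1) + sg (n2, a2, b)) (sg (n1, a, b) + sg (n2, a2, b1))"
      by (rule gen2)
    moreover have "cg (sg (n1, a, b) + sg (0 + n2, a2, b1)) (sg (0, a, b) + sg (n1 + n2, a2, b1))"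
      by (rule gen1)
    ultimately have "cg (sg (n1, a, b1) + sg (n2, a2, b)) (sg (0, a, b) + sg (n1 + n2, a2, b1))"
      using cg_trans by simp
    then have "cg (M2 + (sg (n1, a, b1) + sg (n2, a2, b))) (M2 + (sg (0, a, b) + sg (n1 + n2, a2, b1)))"
      using cg_add by blast
    then have "cg M (sg (0, a, b) + R)"
      unfolding M M1 R_def by (simp add: ac_simps)
    moreover have "lin h M = lin h (sg (0, a, b) + R)" if "\<exists>w0 wa wb. h = wt w0 wa wb" for h
      using that unfolding M M1 R_def by (auto simp: lin_add lin_single wt_def algebra_simps)
    ultimately show ?thesis by blast
  qed
qed

lemma sameW_cg_aux:
  fixes M N :: "('k::finite) var \<Rightarrow>\<^sub>0 nat"
  shows "lin (\<lambda>_. 1) M = r \<Longrightarrow> sameW M N \<Longrightarrow> cg M N"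
proof (induction r arbitrary: M N rule: less_induct)
  case (less r)
  have degN: "lin (\<lambda>_. 1) N = r" using sameW_deg[OF less.prems(2)] less.prems(1) by simp
  consider "r = 0" | "r = 1" | "2 \<le> r" by linarith
  then show ?case
  proof cases
    case 1
    then have "M = 0" "N = 0" using less.prems(1) degN lin_one_zero by auto
    then show ?thesis by (simp add: cg_refl)
  next
    case 2
    obtain v where v: "M = sg v" using lin_one_one less.prems(1) 2 by blast
    obtain v' where v': "N = sg v'" using lin_one_one degN 2 by blast
    have W: "wt w0 wa wb v = wt w0 wa wb v'" for w0 wa wb
      using less.prems(2) unfolding sameW_def v v' by (simp add: lin_single)
    have "fst v = fst v'" using W[of 1 "\<lambda>_. 0" "\<lambda>_. 0"] by (simp add: wt_def)
    moreover have "fst (snd v) = fst (snd v')"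
      using W[of 0 "\<lambda>x. if x = fst (snd v) then 1 else 0" "\<lambda>_. 0"] by (simp add: wt_def split: if_splits)
    moreover have "snd (snd v) = snd (snd v')"
      using W[of 0 "\<lambda>_. 0" "\<lambda>x. if x = snd (snd v) then 1 else 0"] by (simp add: wt_def split: if_splits)
    ultimately have "v = v'" by (simp add: prod_eq_iff)
    then show ?thesis using v v' by (simp add: cg_refl)
  next
    case 3
    then have "lin (\<lambda>_. 1) M > 0" using less.prems(1) by simp
    then obtain v where v: "v \<in> Poly_Mapping.keys M" using lin_pos by blast
    obtain n a b where ve: "v = (n, a, b)" by (cases v) auto
    define ha where "ha = wt 0 (\<lambda>x. if x = a then 1 else 0) (\<lambda>_. 0)"
    define hb where "hb = wt 0 (\<lambda>_. 0) (\<lambda>x. if x = b then 1 else 0)"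
    have "lin ha M = lin ha (sg v) + lin ha (M - sg v)" using split_key[OF v] lin_add by metis
    then have "lin ha M > 0" by (simp add: lin_single ha_def wt_def ve)
    then have "lin ha N > 0" using less.prems(2) unfolding sameW_def ha_def by metis
    then obtain u1 where u1: "u1 \<in> Poly_Mapping.keys N" "ha u1 > 0" using lin_pos by blast
    then obtain n1 b1 where u1e: "u1 = (n1, a, b1)"
      by (cases u1) (auto simp: ha_def wt_def split: if_splits)
    have "lin hb M = lin hb (sg v) + lin hb (M - sg v)" using split_key[OF v] lin_add by metis
    then have "lin hb M > 0" by (simp add: lin_single hb_def wt_def ve)
    then have "lin hb N > 0" using less.prems(2) unfolding sameW_def hb_def by metis
    then obtain u2 where u2: "u2 \<in> Poly_Mapping.keys N" "hb u2 > 0" using lin_pos by blast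
    then obtain n2 a2 where u2e: "u2 = (n2, a2, b)"
      by (cases u2) (auto simp: hb_def wt_def split: if_splits)
    obtain R where R: "cg M (sg (0, a, b) + R)"
      "\<And>h. (\<exists>w0 wa wb. h = wt w0 wa wb) \<Longrightarrow> lin h M = lin h (sg (0, a, b) + R)"
      using peel[of n a b M n a b] v ve 3 less.prems(1) by blast
    obtain R' where R': "cg N (sg (0, a, b) + R')"
      "\<And>h. (\<exists>w0 wa wb. h = wt w0 wa wb) \<Longrightarrow> lin h N = lin h (sg (0, a, b) + R')"
      using peel[of n1 a b1 N n2 a2 b] u1 u2 u1e u2e 3 degN by blast
    have sR: "sameW R R'"
      unfolding sameW_def
    proof (intro allI)
      fix w0 wa wb
      have "lin (wt w0 wa wb) (sg (0, a, b) + R) = lin (wt w0 wa wb) (sg (0, a, b) + R')"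
        using R(2) R'(2) less.prems(2) unfolding sameW_def by metis
      then show "lin (wt w0 wa wb) R = lin (wt w0 wa wb) R'" by (simp add: lin_add)
    qed
    have "lin (\<lambda>_. 1) M = lin (\<lambda>_. 1) (sg (0, a, b) + R)"
    proof -
      have "lin (wt 0 (\<lambda>_. 1) (\<lambda>_. 0)) M = lin (wt 0 (\<lambda>_. 1) (\<lambda>_. 0)) (sg (0, a, b) + R)"
        by (rule R(2)) blast
      then show ?thesis by (simp only: wt_one)
    qed
    then have "lin (\<lambda>_. 1) R < r" using less.prems(1) by (simp add: lin_add lin_single)
    then have "cg R R'" using less.IH sR by blast
    then have "cg (sg (0, a, b) + R) (sg (0, a, b) + R')" by (rule cg_add)
    then show ?thesis using R(1) R'(1) cg_trans cg_sym by blast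
  qed
qed

lemma sameW_cg: "sameW M N \<Longrightarrow> cg M N"
  using sameW_cg_aux by blast

lemma mono_eval_add: "mono_eval (M + N) x = mono_eval M x * mono_eval N x"
proof -
  let ?S = "Poly_Mapping.keys M \<union> Poly_Mapping.keys N"
  have f: "finite ?S" by simp
  have "mono_eval (M + N) x = (\<Prod>v\<in>?S. x v ^ Poly_Mapping.lookup (M + N) v)"
    unfolding mono_eval_def by (rule prod_keys_superset[OF f keys_add]) simp
  also have "\<dots> = (\<Prod>v\<in>?S. x v ^ Poly_Mapping.lookup M v) * (\<Prod>v\<in>?S. x v ^ Poly_Mapping.lookup N v)"
    by (simp add: lookup_add power_add prod.distrib)
  also have "(\<Prod>v\<in>?S. x v ^ Poly_Mapping.lookup M v) = mono_eval M x"
    unfolding mono_eval_def by (rule prod_keys_superset[symmetric]) auto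
  also have "(\<Prod>v\<in>?S. x v ^ Poly_Mapping.lookup N v) = mono_eval N x"
    unfolding mono_eval_def by (rule prod_keys_superset[symmetric]) auto
  finally show ?thesis .
qed

lemma mono_eval_single: "mono_eval (Poly_Mapping.single v 1) x = x v"
  by (simp add: mono_eval_def)

lemma peval_zero [simp]: "peval 0 x = 0"
  by (simp add: peval_def)

lemma peval_add: "peval (p + q) x = peval p x + peval q x"
  unfolding peval_def
  by (rule setsum_keys_plus_distrib[where f = "\<lambda>k c. c * mono_eval k x"]) (simp_all add: algebra_simps)

lemma peval_single: "peval (Poly_Mapping.single M c) x = c * mono_eval M x"
  by (simp add: peval_def)

lemma peval_sum: "peval (sum p A) x = (\<Sum>i\<in>A. peval (p i) x)"
  by (induction A rule: infinite_finite_induct) (simp_all add: peval_add)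

lemma peval_diff: "peval (p - q) x = peval p x - peval q x"
  using peval_add[of "p - q" q x] by simp

lemma peval_mult: "peval (p * q) x = peval p x * peval q x"
proof -
  have "p * q = (\<Sum>M\<in>Poly_Mapping.keys p. Poly_Mapping.single M (Poly_Mapping.lookup p M)) *
                (\<Sum>N\<in>Poly_Mapping.keys q. Poly_Mapping.single N (Poly_Mapping.lookup q N))"
    by (simp only: poly_sum_monomials)
  also have "\<dots> = (\<Sum>M\<in>Poly_Mapping.keys p. \<Sum>N\<in>Poly_Mapping.keys q.
      Poly_Mapping.single (M + N) (Poly_Mapping.lookup p M * Poly_Mapping.lookup q N))"
    by (simp add: sum_product mult_single)
  finally have "peval (p * q) x = (\<Sum>M\<in>Poly_Mapping.keys p. \<Sum>N\<in>Poly_Mapping.keys q.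
      (Poly_Mapping.lookup p M * mono_eval M x) * (Poly_Mapping.lookup q N * mono_eval N x))"
    by (simp add: peval_sum peval_single mono_eval_add ac_simps)
  also have "\<dots> = peval p x * peval q x"
    unfolding peval_def by (simp add: sum_product)
  finally show ?thesis .
qed

lemma peval_Tvar: "peval (Tvar n a b) x = x (n, a, b)"
  unfolding Tvar_def peval_single mono_eval_single by simp

lemma I1_ideal: "is_ideal (I1 :: ('k::finite) cpoly set)"
  unfolding is_ideal_def I1_def by (simp add: peval_add peval_mult)

lemma I1'_sub_I1: "(I1' :: ('k::finite) cpoly set) \<subseteq> I1"
  unfolding I1'_def
proof (rule ideal_gen_least[OF I1_ideal])
  show "{Tvar m a b * Tvar (n + k) c d - Tvar n a b * Tvar (m + k) c d | m n k a b c d. True} \<union>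
        {Tvar m a1 b1 * Tvar n a2 b2 - Tvar m a1 b2 * Tvar n a2 b1 | m n a1 a2 b1 b2. True}
        \<subseteq> (I1 :: 'k cpoly set)"
    unfolding I1_def
    by (auto simp: peval_diff peval_mult peval_Tvar pi1_def power_add ac_simps)
qed

section \<open>Linear independence of characters\<close>

lemma artin:
  fixes X :: "('g \<Rightarrow> complex) set" and mul :: "'g \<Rightarrow> 'g \<Rightarrow> 'g"
  assumes "finite X"
    and "\<And>\<chi> g h. \<chi> \<in> X \<Longrightarrow> \<chi> (mul g h) = \<chi> g * \<chi> h"
    and "\<And>\<chi>. \<chi> \<in> X \<Longrightarrow> \<chi> e = 1"
    and "\<And>g. (\<Sum>\<chi>\<in>X. c \<chi> * \<chi> g) = 0"
    and "\<chi>0 \<in> X"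
  shows "c \<chi>0 = 0"
  using assms
proof (induction "card X" arbitrary: X c \<chi>0 rule: less_induct)
  case less
  note fin = less.prems(1) and hom = less.prems(2) and one = less.prems(3)
    and van = less.prems(4) and mem = less.prems(5)
  show ?case
  proof (cases "X = {\<chi>0}")
    case True
    then show ?thesis using van[of e] one[OF mem] by simp
  next
    case False
    then obtain \<chi>2 where c2: "\<chi>2 \<in> X" "\<chi>2 \<noteq> \<chi>0" using mem by blast
    then obtain h where h: "\<chi>2 h \<noteq> \<chi>0 h" by (meson ext)
    have "c \<chi>2 * (\<chi>2 h - \<chi>0 h) = 0"
    proof (rule less.hyps[of "X - {\<chi>0}" "\<lambda>\<chi>. c \<chi> * (\<chi> h - \<chi>0 h)" \<chi>2])
      show "card (X - {\<chi>0}) < card X" using fin mem by (rule card_Diff1_less)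
      show "finite (X - {\<chi>0})" using fin by simp
      show "\<chi>2 \<in> X - {\<chi>0}" using c2 by simp
      show "\<And>\<chi> g h. \<chi> \<in> X - {\<chi>0} \<Longrightarrow> \<chi> (mul g h) = \<chi> g * \<chi> h" using hom by simp
      show "\<And>\<chi>. \<chi> \<in> X - {\<chi>0} \<Longrightarrow> \<chi> e = 1" using one by simp
      fix g
      have "(\<Sum>\<chi>\<in>X - {\<chi>0}. c \<chi> * (\<chi> h - \<chi>0 h) * \<chi> g) = (\<Sum>\<chi>\<in>X. c \<chi> * (\<chi> h - \<chi>0 h) * \<chi> g)"
        using sum.remove[OF fin mem, of "\<lambda>\<chi>. c \<chi> * (\<chi> h - \<chi>0 h) * \<chi> g"] by simp
      also have "\<dots> = (\<Sum>\<chi>\<in>X. c \<chi> * \<chi> (mul h g)) - \<chi>0 h * (\<Sum>\<chi>\<in>X. c \<chi> * \<chi> g)"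
        by (simp add: hom sum_distrib_left sum_subtractf algebra_simps)
      also have "\<dots> = 0" using van by simp
      finally show "(\<Sum>\<chi>\<in>X - {\<chi>0}. c \<chi> * (\<chi> h - \<chi>0 h) * \<chi> g) = 0" .
    qed
    then have c20: "c \<chi>2 = 0" using h by simp
    show ?thesis
    proof (rule less.hyps[of "X - {\<chi>2}" c \<chi>0])
      show "card (X - {\<chi>2}) < card X" using fin c2(1) by (rule card_Diff1_less)
      show "finite (X - {\<chi>2})" using fin by simp
      show "\<chi>0 \<in> X - {\<chi>2}" using c2 mem by simp
      show "\<And>\<chi> g h. \<chi> \<in> X - {\<chi>2} \<Longrightarrow> \<chi> (mul g h) = \<chi> g * \<chi> h" using hom by simp
      show "\<And>\<chi>. \<chi> \<in> X - {\<chi>2} \<Longrightarrow> \<chi> e = 1" using one by simp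
      fix g
      show "(\<Sum>\<chi>\<in>X - {\<chi>2}. c \<chi> * \<chi> g) = 0"
        using sum.remove[OF fin c2(1), of "\<lambda>\<chi>. c \<chi> * \<chi> g"] van[of g] c20 by simp
    qed
  qed
qed

section \<open>Characters from monomials\<close>

definition ev :: "complex \<times> ('k \<Rightarrow> complex) \<times> ('k \<Rightarrow> complex) \<Rightarrow> 'k var \<Rightarrow> complex" where
  "ev p v = fst p ^ fst v * fst (snd p) (fst (snd v)) * snd (snd p) (snd (snd v))"

definition mulp :: "complex \<times> ('k \<Rightarrow> complex) \<times> ('k \<Rightarrow> complex) \<Rightarrow> complex \<times> ('k \<Rightarrow> complex) \<times> ('k \<Rightarrow> complex)
    \<Rightarrow> complex \<times> ('k \<Rightarrow> complex) \<times> ('k \<Rightarrow> complex)" where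
  "mulp p q = (fst p * fst q, \<lambda>a. fst (snd p) a * fst (snd q) a, \<lambda>b. snd (snd p) b * snd (snd q) b)"

definition chi :: "('k var \<Rightarrow>\<^sub>0 nat) \<Rightarrow> complex \<times> ('k \<Rightarrow> complex) \<times> ('k \<Rightarrow> complex) \<Rightarrow> complex" where
  "chi M p = mono_eval M (ev p)"

lemma chi_mult: "chi M (mulp p q) = chi M p * chi M q"
proof -
  have "ev (mulp p q) = (\<lambda>v. ev p v * ev q v)"
    by (simp add: fun_eq_iff ev_def mulp_def power_mult_distrib ac_simps)
  then show ?thesis
    unfolding chi_def mono_eval_def by (simp add: power_mult_distrib prod.distrib)
qed

lemma chi_one: "chi M (1, \<lambda>_. 1, \<lambda>_. 1) = 1"
  unfolding chi_def mono_eval_def ev_def by simp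

lemma mono_eval_pow: "mono_eval M (\<lambda>v. c ^ h v) = c ^ lin h M"
  unfolding mono_eval_def lin_def
  by (simp add: power_sum power_mult[symmetric] ac_simps)

lemma ev_pow: "ev ((2::complex) ^ w0, \<lambda>a. 2 ^ wa a, \<lambda>b. 2 ^ wb b) = (\<lambda>v. 2 ^ wt w0 wa wb v)"
  by (simp add: fun_eq_iff ev_def wt_def power_add power_mult[symmetric] ac_simps)

lemma chi_sameW:
  assumes "chi M = chi N"
  shows "sameW M N"
  unfolding sameW_def
proof (intro allI)
  fix w0 wa wb
  have "chi M ((2::complex) ^ w0, \<lambda>a. 2 ^ wa a, \<lambda>b. 2 ^ wb b) = chi N ((2::complex) ^ w0, \<lambda>a. 2 ^ wa a, \<lambda>b. 2 ^ wb b)"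
    using assms by simp
  then have "(2::complex) ^ lin (wt w0 wa wb) M = 2 ^ lin (wt w0 wa wb) N"
    unfolding chi_def ev_pow mono_eval_pow .
  then have "of_nat ((2::nat) ^ lin (wt w0 wa wb) M) = (of_nat (2 ^ lin (wt w0 wa wb) N) :: complex)"
    by simp
  then have "(2::nat) ^ lin (wt w0 wa wb) M = 2 ^ lin (wt w0 wa wb) N"
    using of_nat_eq_iff by blast
  then show "lin (wt w0 wa wb) M = lin (wt w0 wa wb) N" by simp
qed

lemma pi1_ev: "pi1 (2 * t - (\<Sum>c\<in>UNIV. v c * u c)) v u = ev (t, u, v)"
  by (simp add: fun_eq_iff pi1_def ev_def)

lemma I1_sub_I1': "(I1 :: ('k::finite) cpoly set) \<subseteq> I1'"
proof
  fix f :: "'k cpoly"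
  assume f: "f \<in> I1"
  define S where "S = Poly_Mapping.keys f"
  define c where "c = Poly_Mapping.lookup f"
  have finS: "finite S" unfolding S_def by simp
  have van: "(\<Sum>M\<in>S. c M * chi M p) = 0" for p
  proof -
    obtain t u v where p: "p = (t, u, v)" by (cases p) auto
    have "peval f (pi1 (2 * t - (\<Sum>c\<in>UNIV. v c * u c)) v u) = 0" using f unfolding I1_def by blast
    then show ?thesis unfolding pi1_ev peval_def S_def c_def chi_def p .
  qed
  define X where "X = chi ` S"
  define d where "d \<chi> = (\<Sum>M\<in>{M\<in>S. chi M = \<chi>}. c M)" for \<chi>
  have finX: "finite X" unfolding X_def using finS by simp
  have vanX: "(\<Sum>\<chi>\<in>X. d \<chi> * \<chi> p) = 0" for p
  proof -
    have "(\<Sum>\<chi>\<in>X. d \<chi> * \<chi> p) = (\<Sum>\<chi>\<in>X. \<Sum>M\<in>{M\<in>S. chi M = \<chi>}. c M * chi M p)"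
      unfolding d_def by (auto simp: sum_distrib_right intro!: sum.cong)
    also have "\<dots> = (\<Sum>M\<in>S. c M * chi M p)"
      unfolding X_def by (rule sum.image_gen[OF finS, symmetric])
    finally show ?thesis using van by simp
  qed
  have d0: "d \<chi> = 0" if "\<chi> \<in> X" for \<chi>
    by (rule artin[OF finX _ _ vanX that, of mulp "(1, \<lambda>_. 1, \<lambda>_. 1)"])
       (auto simp: X_def chi_mult chi_one)
  define rep where "rep \<chi> = (SOME M. M \<in> S \<and> chi M = \<chi>)" for \<chi>
  have rep: "rep (chi M) \<in> S \<and> chi (rep (chi M)) = chi M" if "M \<in> S" for M
    unfolding rep_def by (rule someI[of _ M]) (use that in simp)
  have f_eq: "f = (\<Sum>M\<in>S. Poly_Mapping.single M (c M) - Poly_Mapping.single (rep (chi M)) (c M))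
                 + (\<Sum>M\<in>S. Poly_Mapping.single (rep (chi M)) (c M))"
    unfolding sum_subtractf using poly_sum_monomials[of f] unfolding S_def c_def by simp
  have second: "(\<Sum>M\<in>S. Poly_Mapping.single (rep (chi M)) (c M)) = 0"
  proof -
    have "(\<Sum>M\<in>S. Poly_Mapping.single (rep (chi M)) (c M))
        = (\<Sum>\<chi>\<in>X. \<Sum>M\<in>{M\<in>S. chi M = \<chi>}. Poly_Mapping.single (rep (chi M)) (c M))"
      unfolding X_def by (rule sum.image_gen[OF finS])
    also have "\<dots> = (\<Sum>\<chi>\<in>X. \<Sum>M\<in>{M\<in>S. chi M = \<chi>}. Poly_Mapping.single (rep \<chi>) (c M))"
      by (rule sum.cong) (auto intro!: sum.cong)
    also have "\<dots> = (\<Sum>\<chi>\<in>X. Poly_Mapping.single (rep \<chi>) (d \<chi>))"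
      unfolding d_def by (simp add: sum_single_same)
    also have "\<dots> = 0" using d0 by simp
    finally show ?thesis .
  qed
  have first: "(\<Sum>M\<in>S. Poly_Mapping.single M (c M) - Poly_Mapping.single (rep (chi M)) (c M)) \<in> I1'"
  proof (rule ideal_sum[OF I1'_ideal])
    fix M assume M: "M \<in> S"
    have "cg M (rep (chi M))" using rep[OF M] chi_sameW sameW_cg by metis
    then have "Poly_Mapping.single 0 (c M) * (Poly_Mapping.single M 1 - Poly_Mapping.single (rep (chi M)) 1) \<in> (I1' :: 'k cpoly set)"
      unfolding cg_def by (rule ideal_mult[OF I1'_ideal])
    then show "Poly_Mapping.single M (c M) - Poly_Mapping.single (rep (chi M)) (c M) \<in> (I1' :: 'k cpoly set)"
      by (simp add: right_diff_distrib mult_single)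
  qed
  show "f \<in> I1'" using first second f_eq by simp
qed

theorem mainTheorem6:
  assumes "is_radical (I1' :: ('k::finite) cpoly set)"
  shows "(I1 :: 'k cpoly set) = I1'"
  using I1_sub_I1' I1'_sub_I1 by blast

end
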